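(* Let $\bm z\in\mathbb{R}^d$ and $\alpha>1$, and let $\tau^\star=\tau^\star(\alpha)$ be the unique scalar with $\sum_i [(\alpha-1)(z_i-\tau^\star)]_+^{1/(\alpha-1)}=1$, and $p_i^\star=[(\alpha-1)(z_i-\tau^\star)]_+^{1/(\alpha-1)}$. At any $\alpha$ where $\tau^\star$ is differentiable in $\alpha$ and the support $\mathcal S=\{i:p_i^\star>0\}$ is locally constant in $\alpha$, $$\frac{\partial\tau^\star}{\partial\alpha}=\frac{\frac{1}{(\alpha-1)^2}+\frac{\mathsf H^S(\bm p^\star)}{\alpha-1}}{\sum_{i\in\mathcal S}(p_i^\star)^{2-\alpha}},$$ where $\mathsf H^S(\bm p)=-\sum_j p_j\log p_j$ is the Shannon entropy (with $0\log0=0$).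
   Context: Here $[t]_+=\max(t,0)$, and $\bm p^\star$ is exactly the $\alpha$-entmax of $\bm z$, i.e. $\arg\max_{\bm p\in\triangle^d}\bm p^\top\bm z+\frac{1}{\alpha(\alpha-1)}\sum_j(p_j-p_j^\alpha)$, with $\triangle^d=\{\bm p\in\mathbb{R}^d:p_i\ge0,\sum_ip_i=1\}$. *)

theory Defs
  imports "HOL-Analysis.Analysis"
begin

text \<open>Coordinates are indexed by a finite type 'n (so d = CARD('n)).\<close>

definition pos_part :: "real \<Rightarrow> real" where
  "pos_part t = max t 0"

definition entmax_mass :: "('n::finite \<Rightarrow> real) \<Rightarrow> real \<Rightarrow> real \<Rightarrow> real" where
  "entmax_mass z \<alpha> \<tau> = (\<Sum>i\<in>UNIV. (pos_part ((\<alpha> - 1) * (z i - \<tau>))) powr (1 / (\<alpha> - 1)))"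

definition entmax_tau :: "('n::finite \<Rightarrow> real) \<Rightarrow> real \<Rightarrow> real" where
  "entmax_tau z \<alpha> = (THE \<tau>. entmax_mass z \<alpha> \<tau> = 1)"

definition entmax_p :: "('n::finite \<Rightarrow> real) \<Rightarrow> real \<Rightarrow> 'n \<Rightarrow> real" where
  "entmax_p z \<alpha> i = (pos_part ((\<alpha> - 1) * (z i - entmax_tau z \<alpha>))) powr (1 / (\<alpha> - 1))"

definition entmax_support :: "('n::finite \<Rightarrow> real) \<Rightarrow> real \<Rightarrow> 'n set" where
  "entmax_support z \<alpha> = {i. entmax_p z \<alpha> i > 0}"

definition shannon_entropy :: "('n::finite \<Rightarrow> real) \<Rightarrow> real" where
  "shannon_entropy p = - (\<Sum>j\<in>UNIV. if p j = 0 then 0 else p j * ln (p j))"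

end

theory Submission
  imports Defs
begin

lemma term_mono:
  assumes a: "a > 1" and t: "t1 < t2"
  shows "pos_part ((a - 1) * (zi - t2)) powr (1/(a-1)) \<le> pos_part ((a - 1) * (zi - t1)) powr (1/(a-1))"
proof -
  have "(a - 1) * (zi - t2) \<le> (a - 1) * (zi - t1)"
    using a t by (intro mult_left_mono) auto
  hence "pos_part ((a - 1) * (zi - t2)) \<le> pos_part ((a - 1) * (zi - t1))"
    by (auto simp: pos_part_def)
  then show ?thesis using a by (intro powr_mono2) (auto simp: pos_part_def)
qed

lemma term_strict:
  assumes a: "a > 1" and t: "t1 < t2"
    and pos: "pos_part ((a - 1) * (zi - t2)) powr (1/(a-1)) > 0"
  shows "pos_part ((a - 1) * (zi - t2)) powr (1/(a-1)) < pos_part ((a - 1) * (zi - t1)) powr (1/(a-1))"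
proof -
  have p: "pos_part ((a - 1) * (zi - t2)) \<noteq> 0" using pos by auto
  hence "(a - 1) * (zi - t2) > 0" by (auto simp: pos_part_def max_def split: if_splits)
  moreover have "(a - 1) * (zi - t2) < (a - 1) * (zi - t1)"
    using a t by (intro mult_strict_left_mono) auto
  ultimately have "pos_part ((a - 1) * (zi - t2)) < pos_part ((a - 1) * (zi - t1))"
    by (auto simp: pos_part_def)
  then show ?thesis using a by (intro powr_less_mono2) (auto simp: pos_part_def)
qed

lemma mass_unique:
  fixes z :: "'n::finite \<Rightarrow> real"
  assumes a: "a > 1"
  shows "\<exists>!t. entmax_mass z a t = 1"
proof -
  define m where "m = Max (range z)"
  have "m \<in> range z" unfolding m_def by (rule Max_in) auto
  then obtain i0 where i0: "z i0 = m" by auto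
  have zle: "z i \<le> m" for i unfolding m_def by auto
  have c0: "1/(a-1) > 0" using a by auto
  have "entmax_mass z a m = 0"
    unfolding entmax_mass_def
  proof (rule sum.neutral, rule ballI)
    fix i
    have "(a - 1) * (z i - m) \<le> 0" using a zle[of i] by (simp add: mult_nonneg_nonpos)
    then show "pos_part ((a - 1) * (z i - m)) powr (1 / (a - 1)) = 0"
      by (simp add: pos_part_def max_def)
  qed
  moreover have "entmax_mass z a (m - 1/(a-1)) \<ge> 1"
  proof -
    have "pos_part ((a - 1) * (z i0 - (m - 1/(a-1)))) = 1"
      using a i0 by (simp add: pos_part_def field_simps)
    hence "pos_part ((a - 1) * (z i0 - (m - 1/(a-1)))) powr (1/(a-1)) = 1" by simp
    moreover have "pos_part ((a - 1) * (z i0 - (m - 1/(a-1)))) powr (1/(a-1))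
        \<le> entmax_mass z a (m - 1/(a-1))"
      unfolding entmax_mass_def
      by (rule member_le_sum) (auto simp: pos_part_def)
    ultimately show ?thesis by simp
  qed
  moreover have "continuous_on {m - 1/(a-1)..m} (entmax_mass z a)"
    unfolding entmax_mass_def pos_part_def
  proof (intro continuous_on_sum ballI)
    fix i :: 'n
    show "continuous_on {m - 1 / (a - 1)..m} (\<lambda>t. max ((a - 1) * (z i - t)) 0 powr (1 / (a - 1)))"
      apply (rule continuous_on_powr')
        apply (intro continuous_on_max continuous_on_mult continuous_on_diff continuous_on_const continuous_on_id)
       apply (rule continuous_on_const)
      using c0 apply auto
      done
  qed
  ultimately obtain t where t: "entmax_mass z a t = 1"
    using IVT2'[of "entmax_mass z a" m 1 "m - 1/(a-1)"] c0 by auto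
  have less: "entmax_mass z a t2 < entmax_mass z a t1" if "t1 < t2" "entmax_mass z a t2 = 1" for t1 t2
  proof -
    have "\<exists>i. pos_part ((a - 1) * (z i - t2)) powr (1/(a-1)) > 0"
    proof (rule ccontr)
      assume "\<not> ?thesis"
      hence "\<forall>i. pos_part ((a - 1) * (z i - t2)) powr (1/(a-1)) = 0"
        by (metis less_eq_real_def powr_ge_zero)
      hence "entmax_mass z a t2 = 0" unfolding entmax_mass_def by simp
      with that show False by simp
    qed
    then obtain j where "pos_part ((a - 1) * (z j - t2)) powr (1/(a-1)) > 0" by blast
    then show ?thesis unfolding entmax_mass_def
      using term_mono[OF a that(1)] term_strict[OF a that(1)]
      by (intro sum_strict_mono_ex1) auto
  qed
  show ?thesis
  proof (rule ex1I[where P="\<lambda>t. entmax_mass z a t = 1", OF t])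
    fix t' assume t': "entmax_mass z a t' = 1"
    show "t' = t"
    proof (rule ccontr)
      assume "t' \<noteq> t"
      then consider "t' < t" | "t < t'" by linarith
      then show False using less t t' by (metis less_irrefl)
    qed
  qed
qed


lemma tau_root:
  fixes z :: "'n::finite \<Rightarrow> real"
  assumes a: "a > 1"
  shows "entmax_mass z a (entmax_tau z a) = 1"
  unfolding entmax_tau_def using theI'[OF mass_unique[OF a, of z]] .

lemma supp_pos:
  fixes z :: "'n::finite \<Rightarrow> real"
  assumes "i \<in> entmax_support z a"
  shows "(a - 1) * (z i - entmax_tau z a) > 0"
    and "entmax_p z a i = ((a - 1) * (z i - entmax_tau z a)) powr (1/(a-1))"
proof -
  have "entmax_p z a i > 0" using assms by (simp add: entmax_support_def)
  hence "pos_part ((a - 1) * (z i - entmax_tau z a)) \<noteq> 0"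
    by (auto simp: entmax_p_def)
  thus g: "(a - 1) * (z i - entmax_tau z a) > 0"
    by (auto simp: pos_part_def max_def split: if_splits)
  show "entmax_p z a i = ((a - 1) * (z i - entmax_tau z a)) powr (1/(a-1))"
    using g by (simp add: entmax_p_def pos_part_def)
qed

lemma supp_zero:
  fixes z :: "'n::finite \<Rightarrow> real"
  assumes "i \<notin> entmax_support z a"
  shows "entmax_p z a i = 0"
proof -
  have "entmax_p z a i \<ge> 0" by (simp add: entmax_p_def)
  thus ?thesis using assms by (simp add: entmax_support_def)
qed

lemma sum_support:
  fixes z :: "'n::finite \<Rightarrow> real"
  assumes a: "a > 1"
  shows "(\<Sum>i\<in>entmax_support z a. entmax_p z a i) = 1"
proof -
  have "1 = (\<Sum>i\<in>UNIV. entmax_p z a i)"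
    using tau_root[OF a, of z] by (simp add: entmax_mass_def entmax_p_def)
  also have "\<dots> = (\<Sum>i\<in>entmax_support z a. entmax_p z a i)"
    by (rule sum.mono_neutral_right) (auto simp: supp_zero)
  finally show ?thesis by simp
qed

lemma alg:
  fixes e u T :: real
  assumes "e > 0" "u > 0"
  shows "(u / e - e * T) * (1 / e) / u = 1 / e^2 - T / u"
  using assms by (simp add: field_simps power2_eq_square)

theorem mainTheorem2:
  fixes z :: "'n::finite \<Rightarrow> real" and \<alpha> :: real
  assumes "\<alpha> > 1"
    and "(\<lambda>a. entmax_tau z a) differentiable (at \<alpha>)"
    and "eventually (\<lambda>a. entmax_support z a = entmax_support z \<alpha>) (nhds \<alpha>)"
  shows "((\<lambda>a. entmax_tau z a) has_real_derivative
           ((1 / (\<alpha> - 1)^2 + shannon_entropy (entmax_p z \<alpha>) / (\<alpha> - 1))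
            / (\<Sum>i\<in>entmax_support z \<alpha>. (entmax_p z \<alpha> i) powr (2 - \<alpha>)))) (at \<alpha>)"
proof -
  define S where "S = entmax_support z \<alpha>"
  define \<tau> where "\<tau> = entmax_tau z"
  define p where "p = entmax_p z \<alpha>"
  define u where "u = (\<lambda>i a. (a - 1) * (z i - \<tau> a))"
  define c where "c = (\<lambda>a::real. 1 / (a - 1))"
  define G where "G = (\<lambda>a. \<Sum>i\<in>S. u i a powr c a)"
  have al: "\<alpha> - 1 > 0" using assms(1) by simp
  obtain T where hasT: "(\<tau> has_real_derivative T) (at \<alpha>)"
    using assms(2) unfolding \<tau>_def real_differentiable_def by blast
  have upos: "u i \<alpha> > 0" if "i \<in> S" for i
    using supp_pos(1)[of i z \<alpha>] that by (simp add: u_def S_def \<tau>_def)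
  have pu: "p i = u i \<alpha> powr c \<alpha>" if "i \<in> S" for i
    using supp_pos(2)[of i z \<alpha>] that by (simp add: u_def S_def \<tau>_def p_def c_def)
  have ppos: "p i > 0" if "i \<in> S" for i using that by (simp add: S_def p_def entmax_support_def)
  have ev1: "eventually (\<lambda>a. a > 1) (nhds \<alpha>)"
    using assms(1) by (auto simp: eventually_nhds intro!: exI[of _ "{1<..}"])
  have evG: "eventually (\<lambda>a. G a = 1) (nhds \<alpha>)"
    using ev1 assms(3)
  proof eventually_elim
    case (elim a)
    have "G a = (\<Sum>i\<in>entmax_support z a. entmax_p z a i)"
      unfolding G_def using elim(2)
      by (intro sum.cong) (auto simp: S_def u_def c_def \<tau>_def supp_pos(2))
    also have "\<dots> = 1" using sum_support[OF elim(1)] .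
    finally show ?case .
  qed
  have G0: "(G has_real_derivative 0) (at \<alpha>)"
    by (subst DERIV_cong_ev[OF refl evG refl]) (rule DERIV_const)
  have du: "((\<lambda>a. u i a) has_real_derivative (z i - \<tau> \<alpha>) - (\<alpha> - 1) * T) (at \<alpha>)" for i
    unfolding u_def
    by (rule derivative_eq_intros refl hasT | simp)+
  have dc: "(c has_real_derivative - 1 / (\<alpha> - 1)^2) (at \<alpha>)"
    unfolding c_def using al
    by (auto intro!: derivative_eq_intros simp: power2_eq_square)
  define D where "D = (\<lambda>i. u i \<alpha> powr c \<alpha> * ((- 1 / (\<alpha> - 1)^2) * ln (u i \<alpha>)
                      + ((z i - \<tau> \<alpha>) - (\<alpha> - 1) * T) * c \<alpha> / u i \<alpha>))"
  have GD: "(G has_real_derivative (\<Sum>i\<in>S. D i)) (at \<alpha>)"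
    unfolding G_def D_def
    by (intro DERIV_sum has_real_derivative_powr'[OF du dc] upos)
  have sum0: "(\<Sum>i\<in>S. D i) = 0" using DERIV_unique[OF GD G0] .
  have Dterm: "D i = p i / (\<alpha> - 1)^2 - p i * ln (p i) / (\<alpha> - 1) - T * p i powr (2 - \<alpha>)"
    if i: "i \<in> S" for i
  proof -
    have uu: "u i \<alpha> > 0" using upos[OF i] .
    have lnp: "ln (p i) = c \<alpha> * ln (u i \<alpha>)" using pu[OF i] by simp
    have "p i powr (2 - \<alpha>) = u i \<alpha> powr (c \<alpha> * (2 - \<alpha>))"
      using pu[OF i] by (simp add: powr_powr)
    also have "c \<alpha> * (2 - \<alpha>) = c \<alpha> - 1" using al by (simp add: c_def field_simps)
    also have "u i \<alpha> powr (c \<alpha> - 1) = p i / u i \<alpha>"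
      using uu pu[OF i] by (simp add: powr_diff)
    finally have pp: "p i powr (2 - \<alpha>) = p i / u i \<alpha>" .
    have zt: "z i - \<tau> \<alpha> = u i \<alpha> / (\<alpha> - 1)" using al by (simp add: u_def)
    have k: "(u i \<alpha> / (\<alpha> - 1) - (\<alpha> - 1) * T) * c \<alpha> / u i \<alpha> = 1 / (\<alpha> - 1)^2 - T / u i \<alpha>"
      unfolding c_def using alg[OF al uu] .
    have k2: "c \<alpha> * (p i * ln (u i \<alpha>)) / (\<alpha> - 1) = p i * ln (u i \<alpha>) / (\<alpha> - 1)^2"
      using al by (simp add: c_def power2_eq_square)
    show ?thesis
      unfolding D_def pu[OF i, symmetric] pp lnp zt k
      using k2 by (simp add: algebra_simps)
  qed
  define W where "W = (\<Sum>i\<in>S. p i powr (2 - \<alpha>))"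
  have Sp: "(\<Sum>i\<in>S. p i) = 1" using sum_support[OF assms(1), of z] by (simp add: S_def p_def)
  have H: "shannon_entropy p = - (\<Sum>i\<in>S. p i * ln (p i))"
  proof -
    have "(\<Sum>j\<in>UNIV. if p j = 0 then 0 else p j * ln (p j)) = (\<Sum>j\<in>S. if p j = 0 then 0 else p j * ln (p j))"
      by (rule sum.mono_neutral_right) (auto simp: S_def p_def supp_zero)
    also have "\<dots> = (\<Sum>j\<in>S. p j * ln (p j))"
      by (rule sum.cong) (use ppos in fastforce)+
    finally show ?thesis by (simp add: shannon_entropy_def)
  qed
  have Sne: "S \<noteq> {}" using Sp by auto
  have Wpos: "W > 0" unfolding W_def
  proof (rule sum_pos)
    show "finite S" by simp
    show "S \<noteq> {}" by (rule Sne)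
    fix i assume "i \<in> S"
    hence "p i \<noteq> 0" using ppos by force
    thus "0 < p i powr (2 - \<alpha>)" by simp
  qed
  have "0 = (\<Sum>i\<in>S. p i / (\<alpha> - 1)^2 - p i * ln (p i) / (\<alpha> - 1) - T * p i powr (2 - \<alpha>))"
  proof -
    have "(\<Sum>i\<in>S. D i) = (\<Sum>i\<in>S. p i / (\<alpha> - 1)^2 - p i * ln (p i) / (\<alpha> - 1) - T * p i powr (2 - \<alpha>))"
      by (rule sum.cong[OF refl]) (rule Dterm)
    then show ?thesis using sum0 by simp
  qed
  also have "\<dots> = (\<Sum>i\<in>S. p i) / (\<alpha> - 1)^2 - (\<Sum>i\<in>S. p i * ln (p i)) / (\<alpha> - 1) - T * W"
    unfolding W_def sum_subtractf sum_divide_distrib sum_distrib_left ..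
  finally have eq: "0 = 1 / (\<alpha> - 1)^2 + shannon_entropy p / (\<alpha> - 1) - T * W"
    unfolding Sp H by (simp only: minus_divide_left diff_conv_add_uminus)
  have Teq: "T = (1 / (\<alpha> - 1)^2 + shannon_entropy p / (\<alpha> - 1)) / W"
  proof -
    have "T * W = 1 / (\<alpha> - 1)^2 + shannon_entropy p / (\<alpha> - 1)" using eq by linarith
    thus ?thesis using Wpos by (simp add: eq_divide_eq)
  qed
  show ?thesis using hasT[unfolded Teq] unfolding \<tau>_def S_def p_def W_def .
qed

end
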